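(* Let $q\ge1$ and let $\mathcal{T}_q=(\tau_1,\ldots,\tau_q)$ be the permutation ideal in $S_{\mathcal{T}}=K[x_\sigma:\sigma\in S_q]$. Consider the simplicial complex $\mathbb{M}_q^2$ with vertex set $\{\tau_i\tau_j:1\le i\le j\le q\}$, $\mathcal{M}=\{\tau_i\tau_j:1\le i<j\le q\}$, facets $\mathcal{M}_k=\mathcal{M}\cup\{\tau_k^2\}$ ($k\in[q]$), and for a set $A$ of vertices let $m_A$ be the lcm of its elements. Then: (i) $m_{\mathcal{M}}=\prod_{\sigma\in S_q}x_\sigma^{2q-1}$; (ii) for a face $\gamma\in\mathbb{M}_q^2$ and $\sigma\in S_q$: $x_\sigma^{2q}\mid m_\gamma$ if and only if $\tau_i^2\in\gamma$ for some $i\in[q]$ with $\sigma(i)=q$; (iii) for a face $\gamma\in\mathbb{M}_q^2$ and $\sigma\in S_q$ with $\sigma(i)=q$ and $\sigma(j)=q-1$: if $\tau_i^2\notin\gamma$, then $x_\sigma^{2q-1}\mid m_\gamma$ if and only if $\tau_i\tau_j\in\gamma$; (iv) for every $k\in[q]$, $m_{\mathcal{M}_k}=\prod_{\sigma\in S_q,\ \sigma(k)=q}x_\sigma^{2q}\prod_{\sigma\in S_q,\ \sigma(k)\neq q}x_\sigma^{2q-1}$; (v) $m_{V(\mathbb{M}_q^2)}=\prod_{\sigma\in S_q}x_\sigma^{2q}$, where $V(\mathbb{M}_q^2)$ is the vertex set.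
   Context: $S_q$ is the symmetric group on $[q]$; for $\sigma=i_1\cdots i_q$ in one-line notation, $\sigma(j)=i_j$. $K$ is a field, $\tau_i=\prod_{\sigma\in S_q}x_\sigma^{\sigma(i)}$, and $\mathcal{T}_q=(\tau_1,\ldots,\tau_q)$. The monomials $\tau_i\tau_j$ ($1\le i\le j\le q$) are pairwise distinct, so they can serve as vertex names. *)

theory Defs
  imports "HOL-Combinatorics.Permutations"
begin

text \<open>Monomials in the variables x_sigma (sigma in S_q) of S_T = K[x_sigma] are
represented by their exponent vectors: a monomial is a function from
permutations (functions nat => nat permuting {1..q}) to exponents.\<close>

type_synonym mono = "(nat \<Rightarrow> nat) \<Rightarrow> nat"

definition Sq :: "nat \<Rightarrow> (nat \<Rightarrow> nat) set" where
  "Sq q = {\<sigma>. \<sigma> permutes {1..q}}"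

text \<open>tau_i = prod over sigma in S_q of x_sigma^(sigma(i))\<close>
definition tau :: "nat \<Rightarrow> nat \<Rightarrow> mono" where
  "tau q i = (\<lambda>\<sigma>. if \<sigma> \<in> Sq q then \<sigma> i else 0)"

definition mmul :: "mono \<Rightarrow> mono \<Rightarrow> mono" where
  "mmul a b = (\<lambda>\<sigma>. a \<sigma> + b \<sigma>)"

definition xpow :: "(nat \<Rightarrow> nat) \<Rightarrow> nat \<Rightarrow> mono" where
  "xpow \<sigma> e = (\<lambda>\<rho>. if \<rho> = \<sigma> then e else 0)"

definition mprod :: "'a set \<Rightarrow> ('a \<Rightarrow> mono) \<Rightarrow> mono" where
  "mprod S f = (\<lambda>\<rho>. \<Sum>s\<in>S. f s \<rho>)"

text \<open>lcm of a finite set of monomials (lcm of the empty set is 1)\<close>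
definition mlcm :: "mono set \<Rightarrow> mono" where
  "mlcm A = (\<lambda>\<rho>. Max (insert 0 ((\<lambda>m. m \<rho>) ` A)))"

definition mdvd :: "mono \<Rightarrow> mono \<Rightarrow> bool" where
  "mdvd a b \<longleftrightarrow> (\<forall>\<rho>. a \<rho> \<le> b \<rho>)"

definition Vert :: "nat \<Rightarrow> mono set" where
  "Vert q = {mmul (tau q i) (tau q j) | i j. 1 \<le> i \<and> i \<le> j \<and> j \<le> q}"

definition Mset :: "nat \<Rightarrow> mono set" where
  "Mset q = {mmul (tau q i) (tau q j) | i j. 1 \<le> i \<and> i < j \<and> j \<le> q}"

definition facet :: "nat \<Rightarrow> nat \<Rightarrow> mono set" where
  "facet q k = insert (mmul (tau q k) (tau q k)) (Mset q)"

definition faces :: "nat \<Rightarrow> mono set set" where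
  "faces q = {\<gamma>. \<exists>k\<in>{1..q}. \<gamma> \<subseteq> facet q k}"

end

theory Submission
  imports Defs
begin

lemma finite_Sq: "finite (Sq q)"
  unfolding Sq_def using finite_permutations[of "{1..q}"] by simp

lemma Sq_in: "\<sigma> \<in> Sq q \<Longrightarrow> i \<in> {1..q} \<Longrightarrow> \<sigma> i \<in> {1..q}"
  unfolding Sq_def using permutes_in_image[of \<sigma> "{1..q}" i] by blast

lemma Sq_inj: "\<sigma> \<in> Sq q \<Longrightarrow> \<sigma> i = \<sigma> j \<Longrightarrow> i = j"
  unfolding Sq_def using permutes_inj[of \<sigma> "{1..q}"] by (simp add: inj_eq)

lemma Sq_surj: "\<sigma> \<in> Sq q \<Longrightarrow> k \<in> {1..q} \<Longrightarrow> \<exists>i\<in>{1..q}. \<sigma> i = k"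
proof -
  assume a: "\<sigma> \<in> Sq q" "k \<in> {1..q}"
  then have p: "\<sigma> permutes {1..q}" unfolding Sq_def by simp
  have "inv \<sigma> permutes {1..q}" using permutes_inv[OF p] .
  then have "inv \<sigma> k \<in> {1..q}" using permutes_in_image[of "inv \<sigma>" "{1..q}" k] a(2) by blast
  moreover have "\<sigma> (inv \<sigma> k) = k" using permutes_inverses(1)[OF p] .
  ultimately show ?thesis by blast
qed

lemma Sq_pair: "\<sigma> \<in> Sq q \<Longrightarrow> i \<in> {1..q} \<Longrightarrow> j \<in> {1..q} \<Longrightarrow> i \<noteq> j
  \<Longrightarrow> \<sigma> i + \<sigma> j \<le> 2*q - 1"
proof -
  assume a: "\<sigma> \<in> Sq q" "i \<in> {1..q}" "j \<in> {1..q}" "i \<noteq> j"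
  have "\<sigma> i \<noteq> \<sigma> j" using a Sq_inj by blast
  moreover have "\<sigma> i \<in> {1..q}" "\<sigma> j \<in> {1..q}" using Sq_in[OF a(1) a(2)] Sq_in[OF a(1) a(3)] by auto
  ultimately show ?thesis by (simp only: atLeastAtMost_iff) linarith
qed

lemma Sq_pair2: "\<sigma> \<in> Sq q \<Longrightarrow> i \<in> {1..q} \<Longrightarrow> j \<in> {1..q} \<Longrightarrow> i \<noteq> j
  \<Longrightarrow> \<sigma> i + \<sigma> j \<ge> 2*q - 1 \<Longrightarrow> (\<sigma> i = q \<and> \<sigma> j = q - 1) \<or> (\<sigma> j = q \<and> \<sigma> i = q - 1)"
proof -
  assume a: "\<sigma> \<in> Sq q" "i \<in> {1..q}" "j \<in> {1..q}" "i \<noteq> j" "\<sigma> i + \<sigma> j \<ge> 2*q - 1"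
  have "\<sigma> i \<noteq> \<sigma> j" using a Sq_inj by blast
  moreover have "\<sigma> i \<in> {1..q}" "\<sigma> j \<in> {1..q}" using Sq_in[OF a(1) a(2)] Sq_in[OF a(1) a(3)] by auto
  ultimately show ?thesis using a(5) by (simp only: atLeastAtMost_iff) linarith
qed

lemma T_val: "mmul (tau q i) (tau q j) \<sigma> = (if \<sigma> \<in> Sq q then \<sigma> i + \<sigma> j else 0)"
  by (simp add: mmul_def tau_def)

lemma T_comm: "mmul (tau q i) (tau q j) = mmul (tau q j) (tau q i)"
  by (auto simp: mmul_def)

lemma mprod_val: "finite S \<Longrightarrow> mprod S (\<lambda>\<sigma>. xpow \<sigma> e) \<rho> = (if \<rho> \<in> S then e else 0)"
  unfolding mprod_def xpow_def by simp

lemma mlcm_le: "finite A \<Longrightarrow> (mlcm A \<rho> \<le> n) \<longleftrightarrow> (\<forall>m\<in>A. m \<rho> \<le> n)"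
  unfolding mlcm_def by simp

lemma mlcm_ge: "finite A \<Longrightarrow> (n \<le> mlcm A \<rho>) \<longleftrightarrow> (n = 0 \<or> (\<exists>m\<in>A. n \<le> m \<rho>))"
  unfolding mlcm_def by (auto simp: Max_ge_iff)

lemma mlcm_upper: "finite A \<Longrightarrow> m \<in> A \<Longrightarrow> m \<rho> \<le> mlcm A \<rho>"
  using mlcm_ge[of A "m \<rho>" \<rho>] by blast

lemma mdvd_xpow: "mdvd (xpow \<sigma> e) b \<longleftrightarrow> e \<le> b \<sigma>"
  unfolding mdvd_def xpow_def by auto

lemma Vert_eq: "Vert q = (\<lambda>(i,j). mmul (tau q i) (tau q j)) ` {(i,j). 1 \<le> i \<and> i \<le> j \<and> j \<le> q}"
  unfolding Vert_def by auto

lemma Mset_eq: "Mset q = (\<lambda>(i,j). mmul (tau q i) (tau q j)) ` {(i,j). 1 \<le> i \<and> i < j \<and> j \<le> q}"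
  unfolding Mset_def by auto

lemma finite_Vert: "finite (Vert q)"
proof -
  have "{(i,j). 1 \<le> i \<and> i \<le> j \<and> j \<le> q} \<subseteq> {1..q} \<times> {1..q}" by auto
  then have "finite {(i::nat,j). 1 \<le> i \<and> i \<le> j \<and> j \<le> q}" by (rule finite_subset) simp
  then show ?thesis unfolding Vert_eq by simp
qed

lemma finite_Mset: "finite (Mset q)"
proof -
  have "{(i,j). 1 \<le> i \<and> i < j \<and> j \<le> q} \<subseteq> {1..q} \<times> {1..q}" by auto
  then have "finite {(i::nat,j). 1 \<le> i \<and> i < j \<and> j \<le> q}" by (rule finite_subset) simp
  then show ?thesis unfolding Mset_eq by simp
qed

lemma finite_facet: "finite (facet q k)"
  unfolding facet_def using finite_Mset by simp

lemma finite_face: "\<gamma> \<in> faces q \<Longrightarrow> finite \<gamma>"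
  unfolding faces_def using finite_facet finite_subset by blast

lemma Mset_le: "m \<in> Mset q \<Longrightarrow> m \<rho> \<le> 2*q - 1"
  unfolding Mset_def using Sq_pair by (auto simp: T_val)

lemma Mset_0: "m \<in> Mset q \<Longrightarrow> \<rho> \<notin> Sq q \<Longrightarrow> m \<rho> = 0"
  unfolding Mset_def by (auto simp: T_val)

lemma Vert_le: "m \<in> Vert q \<Longrightarrow> m \<rho> \<le> 2*q"
proof -
  assume "m \<in> Vert q"
  then obtain i j where m: "m = mmul (tau q i) (tau q j)" "1 \<le> i" "i \<le> j" "j \<le> q"
    unfolding Vert_def by blast
  show ?thesis
  proof (cases "\<rho> \<in> Sq q")
    case True
    then have "\<rho> i \<in> {1..q}" "\<rho> j \<in> {1..q}" using m Sq_in by auto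
    then show ?thesis using m True by (simp add: T_val)
  qed (simp add: m T_val)
qed

lemma Vert_0: "m \<in> Vert q \<Longrightarrow> \<rho> \<notin> Sq q \<Longrightarrow> m \<rho> = 0"
  unfolding Vert_def by (auto simp: T_val)

lemma Mset_T: "1 \<le> i \<Longrightarrow> i \<le> q \<Longrightarrow> 1 \<le> j \<Longrightarrow> j \<le> q \<Longrightarrow> i \<noteq> j
  \<Longrightarrow> mmul (tau q i) (tau q j) \<in> Mset q"
proof -
  assume a: "1 \<le> i" "i \<le> q" "1 \<le> j" "j \<le> q" "i \<noteq> j"
  show ?thesis
  proof (cases "i < j")
    case True
    then show ?thesis using a unfolding Mset_def by blast
  next
    case False
    then have "j < i" using a by simp
    then have "mmul (tau q j) (tau q i) \<in> Mset q" using a unfolding Mset_def by blast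
    then show ?thesis using T_comm[of q i j] by simp
  qed
qed

lemma facet_cases: "m \<in> facet q k \<Longrightarrow> m = mmul (tau q k) (tau q k) \<or>
   (\<exists>a b. m = mmul (tau q a) (tau q b) \<and> 1 \<le> a \<and> a < b \<and> b \<le> q)"
  unfolding facet_def Mset_def by blast

theorem lemma4p6:
  fixes q :: nat
  assumes "q \<ge> 1"
  shows
    "(q \<ge> 2 \<longrightarrow> mlcm (Mset q) = mprod (Sq q) (\<lambda>\<sigma>. xpow \<sigma> (2*q - 1)))
   \<and> (\<forall>\<gamma>\<in>faces q. \<forall>\<sigma>\<in>Sq q.
        mdvd (xpow \<sigma> (2*q)) (mlcm \<gamma>) \<longleftrightarrow>
        (\<exists>i\<in>{1..q}. mmul (tau q i) (tau q i) \<in> \<gamma> \<and> \<sigma> i = q))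
   \<and> (\<forall>\<gamma>\<in>faces q. \<forall>\<sigma>\<in>Sq q. \<forall>i\<in>{1..q}. \<forall>j\<in>{1..q}.
        \<sigma> i = q \<longrightarrow> \<sigma> j = q - 1 \<longrightarrow> mmul (tau q i) (tau q i) \<notin> \<gamma> \<longrightarrow>
        (mdvd (xpow \<sigma> (2*q - 1)) (mlcm \<gamma>) \<longleftrightarrow> mmul (tau q i) (tau q j) \<in> \<gamma>))
   \<and> (\<forall>k\<in>{1..q}. mlcm (facet q k) =
        mmul (mprod {\<sigma>\<in>Sq q. \<sigma> k = q} (\<lambda>\<sigma>. xpow \<sigma> (2*q)))
             (mprod {\<sigma>\<in>Sq q. \<sigma> k \<noteq> q} (\<lambda>\<sigma>. xpow \<sigma> (2*q - 1))))
   \<and> mlcm (Vert q) = mprod (Sq q) (\<lambda>\<sigma>. xpow \<sigma> (2*q))"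
proof (intro conjI)
  have qin: "q \<in> {1..q}" using assms by simp
  show "q \<ge> 2 \<longrightarrow> mlcm (Mset q) = mprod (Sq q) (\<lambda>\<sigma>. xpow \<sigma> (2*q - 1))"
  proof
    assume q2: "q \<ge> 2"
    show "mlcm (Mset q) = mprod (Sq q) (\<lambda>\<sigma>. xpow \<sigma> (2*q - 1))"
    proof
      fix \<rho>
      show "mlcm (Mset q) \<rho> = mprod (Sq q) (\<lambda>\<sigma>. xpow \<sigma> (2*q - 1)) \<rho>"
      proof (cases "\<rho> \<in> Sq q")
        case True
        obtain i where i: "i \<in> {1..q}" "\<rho> i = q" using Sq_surj[OF True qin] by blast
        have q1in: "q - 1 \<in> {1..q}" using q2 by simp
        obtain j where j: "j \<in> {1..q}" "\<rho> j = q - 1" using Sq_surj[OF True q1in] by blast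
        have "i \<noteq> j" using i j q2 by auto
        then have "mmul (tau q i) (tau q j) \<in> Mset q" using i j Mset_T by auto
        moreover have "mmul (tau q i) (tau q j) \<rho> = 2*q - 1" using i j True q2 by (simp add: T_val)
        ultimately have "2*q - 1 \<le> mlcm (Mset q) \<rho>" using mlcm_ge[OF finite_Mset] by (metis order_refl)
        moreover have "mlcm (Mset q) \<rho> \<le> 2*q - 1" using mlcm_le[OF finite_Mset] Mset_le by blast
        ultimately show ?thesis using True by (simp add: mprod_val finite_Sq)
      next
        case False
        have "mlcm (Mset q) \<rho> \<le> 0" unfolding mlcm_le[OF finite_Mset] using Mset_0[OF _ False] by simp
        then show ?thesis using False by (simp add: mprod_val finite_Sq)
      qed
    qed
  qed
  show "\<forall>\<gamma>\<in>faces q. \<forall>\<sigma>\<in>Sq q.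
        mdvd (xpow \<sigma> (2*q)) (mlcm \<gamma>) \<longleftrightarrow>
        (\<exists>i\<in>{1..q}. mmul (tau q i) (tau q i) \<in> \<gamma> \<and> \<sigma> i = q)"
  proof (intro ballI)
    fix \<gamma> \<sigma> assume g: "\<gamma> \<in> faces q" and s: "\<sigma> \<in> Sq q"
    obtain k where k: "k \<in> {1..q}" "\<gamma> \<subseteq> facet q k" using g unfolding faces_def by blast
    have fin: "finite \<gamma>" using g finite_face by blast
    have "mdvd (xpow \<sigma> (2*q)) (mlcm \<gamma>) \<longleftrightarrow> (\<exists>m\<in>\<gamma>. 2*q \<le> m \<sigma>)"
      using mlcm_ge[OF fin] assms by (simp add: mdvd_xpow)
    also have "\<dots> \<longleftrightarrow> (\<exists>i\<in>{1..q}. mmul (tau q i) (tau q i) \<in> \<gamma> \<and> \<sigma> i = q)"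
    proof
      assume "\<exists>m\<in>\<gamma>. 2*q \<le> m \<sigma>"
      then obtain m where m: "m \<in> \<gamma>" "2*q \<le> m \<sigma>" by blast
      have "m \<in> facet q k" using m k by blast
      from facet_cases[OF this] show "\<exists>i\<in>{1..q}. mmul (tau q i) (tau q i) \<in> \<gamma> \<and> \<sigma> i = q"
      proof (elim disjE exE conjE)
        assume e: "m = mmul (tau q k) (tau q k)"
        have "\<sigma> k \<in> {1..q}" using Sq_in s k by blast
        then have "\<sigma> k = q" using m e s by (auto simp: T_val)
        then show ?thesis using e m k by blast
      next
        fix a b assume e: "m = mmul (tau q a) (tau q b)" "1 \<le> a" "a < b" "b \<le> q"
        have "\<sigma> a + \<sigma> b \<le> 2*q - 1" using Sq_pair[OF s, of a b] e by auto
        then show ?thesis using m e s assms by (simp add: T_val)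
      qed
    next
      assume "\<exists>i\<in>{1..q}. mmul (tau q i) (tau q i) \<in> \<gamma> \<and> \<sigma> i = q"
      then obtain i where "i \<in> {1..q}" "mmul (tau q i) (tau q i) \<in> \<gamma>" "\<sigma> i = q" by blast
      then show "\<exists>m\<in>\<gamma>. 2*q \<le> m \<sigma>" using s by (auto simp: T_val intro!: bexI[of _ "mmul (tau q i) (tau q i)"])
    qed
    finally show "mdvd (xpow \<sigma> (2*q)) (mlcm \<gamma>) \<longleftrightarrow>
        (\<exists>i\<in>{1..q}. mmul (tau q i) (tau q i) \<in> \<gamma> \<and> \<sigma> i = q)" .
  qed
  show "\<forall>\<gamma>\<in>faces q. \<forall>\<sigma>\<in>Sq q. \<forall>i\<in>{1..q}. \<forall>j\<in>{1..q}.
        \<sigma> i = q \<longrightarrow> \<sigma> j = q - 1 \<longrightarrow> mmul (tau q i) (tau q i) \<notin> \<gamma> \<longrightarrow>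
        (mdvd (xpow \<sigma> (2*q - 1)) (mlcm \<gamma>) \<longleftrightarrow> mmul (tau q i) (tau q j) \<in> \<gamma>)"
  proof (intro ballI impI)
    fix \<gamma> \<sigma> i j assume g: "\<gamma> \<in> faces q" and s: "\<sigma> \<in> Sq q" and ij: "i \<in> {1..q}" "j \<in> {1..q}"
      "\<sigma> i = q" "\<sigma> j = q - 1" and ni: "mmul (tau q i) (tau q i) \<notin> \<gamma>"
    have q2: "q \<ge> 2" using ij Sq_in[OF s, of j] by auto
    have inj: "i \<noteq> j" using ij q2 by auto
    obtain k where k: "k \<in> {1..q}" "\<gamma> \<subseteq> facet q k" using g unfolding faces_def by blast
    have fin: "finite \<gamma>" using g finite_face by blast
    have "mdvd (xpow \<sigma> (2*q - 1)) (mlcm \<gamma>) \<longleftrightarrow> (\<exists>m\<in>\<gamma>. 2*q - 1 \<le> m \<sigma>)"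
      using mlcm_ge[OF fin] q2 by (simp add: mdvd_xpow)
    also have "\<dots> \<longleftrightarrow> mmul (tau q i) (tau q j) \<in> \<gamma>"
    proof
      assume "\<exists>m\<in>\<gamma>. 2*q - 1 \<le> m \<sigma>"
      then obtain m where m: "m \<in> \<gamma>" "2*q - 1 \<le> m \<sigma>" by blast
      have "m \<in> facet q k" using m k by blast
      from facet_cases[OF this] show "mmul (tau q i) (tau q j) \<in> \<gamma>"
      proof (elim disjE exE conjE)
        assume e: "m = mmul (tau q k) (tau q k)"
        have "\<sigma> k \<in> {1..q}" using Sq_in s k by blast
        then have "\<sigma> k = q" using m e s by (auto simp: T_val)
        then have "k = i" using ij Sq_inj[OF s] by metis
        then show ?thesis using e m ni by blast
      next
        fix a b assume e: "m = mmul (tau q a) (tau q b)" "1 \<le> a" "a < b" "b \<le> q"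
        have "(\<sigma> a = q \<and> \<sigma> b = q - 1) \<or> (\<sigma> b = q \<and> \<sigma> a = q - 1)"
          using Sq_pair2[OF s, of a b] e m s by (auto simp: T_val)
        then have "(a = i \<and> b = j) \<or> (b = i \<and> a = j)" using ij Sq_inj[OF s] by metis
        then show ?thesis using e m T_comm by metis
      qed
    next
      assume "mmul (tau q i) (tau q j) \<in> \<gamma>"
      then show "\<exists>m\<in>\<gamma>. 2*q - 1 \<le> m \<sigma>" using s ij by (auto simp: T_val intro!: bexI[of _ "mmul (tau q i) (tau q j)"])
    qed
    finally show "mdvd (xpow \<sigma> (2*q - 1)) (mlcm \<gamma>) \<longleftrightarrow> mmul (tau q i) (tau q j) \<in> \<gamma>" .
  qed
  show "\<forall>k\<in>{1..q}. mlcm (facet q k) =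
        mmul (mprod {\<sigma>\<in>Sq q. \<sigma> k = q} (\<lambda>\<sigma>. xpow \<sigma> (2*q)))
             (mprod {\<sigma>\<in>Sq q. \<sigma> k \<noteq> q} (\<lambda>\<sigma>. xpow \<sigma> (2*q - 1)))"
  proof
    fix k assume k: "k \<in> {1..q}"
    show "mlcm (facet q k) =
        mmul (mprod {\<sigma>\<in>Sq q. \<sigma> k = q} (\<lambda>\<sigma>. xpow \<sigma> (2*q)))
             (mprod {\<sigma>\<in>Sq q. \<sigma> k \<noteq> q} (\<lambda>\<sigma>. xpow \<sigma> (2*q - 1)))"
    proof
      fix \<rho>
      have f1: "finite {\<sigma>\<in>Sq q. \<sigma> k = q}" "finite {\<sigma>\<in>Sq q. \<sigma> k \<noteq> q}" using finite_Sq by auto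
      have fl: "mlcm (facet q k) \<rho> = max (mmul (tau q k) (tau q k) \<rho>) (mlcm (Mset q) \<rho>)"
      proof (rule antisym)
        show "mlcm (facet q k) \<rho> \<le> max (mmul (tau q k) (tau q k) \<rho>) (mlcm (Mset q) \<rho>)"
          by (subst mlcm_le[OF finite_facet]) (auto simp: facet_def le_max_iff_disj mlcm_upper[OF finite_Mset])
        have "mlcm (Mset q) \<rho> \<le> mlcm (facet q k) \<rho>"
          unfolding mlcm_le[OF finite_Mset] using mlcm_upper[OF finite_facet] unfolding facet_def by blast
        moreover have "mmul (tau q k) (tau q k) \<rho> \<le> mlcm (facet q k) \<rho>"
          using mlcm_upper[OF finite_facet] unfolding facet_def by blast
        ultimately show "max (mmul (tau q k) (tau q k) \<rho>) (mlcm (Mset q) \<rho>) \<le> mlcm (facet q k) \<rho>"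
          by simp
      qed
      show "mlcm (facet q k) \<rho> = mmul (mprod {\<sigma>\<in>Sq q. \<sigma> k = q} (\<lambda>\<sigma>. xpow \<sigma> (2*q)))
             (mprod {\<sigma>\<in>Sq q. \<sigma> k \<noteq> q} (\<lambda>\<sigma>. xpow \<sigma> (2*q - 1))) \<rho>"
      proof (cases "\<rho> \<in> Sq q")
        case False
        have "mlcm (Mset q) \<rho> \<le> 0" unfolding mlcm_le[OF finite_Mset] using Mset_0[OF _ False] by simp
        then show ?thesis using False fl f1 by (simp add: mprod_val mmul_def tau_def)
      next
        case True
        have rk: "\<rho> k \<in> {1..q}" using Sq_in True k by blast
        have le: "mlcm (Mset q) \<rho> \<le> 2*q - 1" using mlcm_le[OF finite_Mset] Mset_le by blast
        show ?thesis
        proof (cases "\<rho> k = q")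
          case True
          then show ?thesis using \<open>\<rho> \<in> Sq q\<close> fl f1 le by (simp add: mprod_val mmul_def tau_def)
        next
          case False
          then have q2: "q \<ge> 2" using rk by auto
          obtain i where i: "i \<in> {1..q}" "\<rho> i = q" using Sq_surj[OF \<open>\<rho> \<in> Sq q\<close> qin] by blast
          have q1in: "q - 1 \<in> {1..q}" using q2 by simp
        obtain j where j: "j \<in> {1..q}" "\<rho> j = q - 1" using Sq_surj[OF \<open>\<rho> \<in> Sq q\<close> q1in] by blast
          have "i \<noteq> j" using i j q2 by auto
          then have "mmul (tau q i) (tau q j) \<in> Mset q" using i j Mset_T by auto
          moreover have "mmul (tau q i) (tau q j) \<rho> = 2*q - 1" using i j \<open>\<rho> \<in> Sq q\<close> q2 by (simp add: T_val)
          ultimately have "2*q - 1 \<le> mlcm (Mset q) \<rho>" using mlcm_ge[OF finite_Mset] by (metis order_refl)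
          then have ml: "mlcm (Mset q) \<rho> = 2*q - 1" using le by simp
          have "\<rho> k + \<rho> k \<le> 2*q - 1" using rk False by (simp only: atLeastAtMost_iff) linarith
          then show ?thesis using ml \<open>\<rho> \<in> Sq q\<close> False rk fl f1 by (simp add: mprod_val mmul_def tau_def max_def)
        qed
      qed
    qed
  qed
  show "mlcm (Vert q) = mprod (Sq q) (\<lambda>\<sigma>. xpow \<sigma> (2*q))"
  proof
    fix \<rho>
    show "mlcm (Vert q) \<rho> = mprod (Sq q) (\<lambda>\<sigma>. xpow \<sigma> (2*q)) \<rho>"
    proof (cases "\<rho> \<in> Sq q")
      case True
      obtain i where i: "i \<in> {1..q}" "\<rho> i = q" using Sq_surj[OF True qin] by blast
      have "mmul (tau q i) (tau q i) \<in> Vert q" using i unfolding Vert_def by auto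
      moreover have "mmul (tau q i) (tau q i) \<rho> = 2*q" using i True by (simp add: T_val)
      ultimately have "2*q \<le> mlcm (Vert q) \<rho>" using mlcm_ge[OF finite_Vert] by (metis order_refl)
      moreover have "mlcm (Vert q) \<rho> \<le> 2*q" using mlcm_le[OF finite_Vert] Vert_le by blast
      ultimately show ?thesis using True by (simp add: mprod_val finite_Sq)
    next
      case False
      have "mlcm (Vert q) \<rho> \<le> 0" unfolding mlcm_le[OF finite_Vert] using Vert_0[OF _ False] by simp
      then show ?thesis using False by (simp add: mprod_val finite_Sq)
    qed
  qed
qed

end
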